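(* Let $G$ be the Cayley graph of a finitely generated group with respect to a finite symmetric generating set, and suppose its volume growth satisfies $v(n)\succeq n^d$ for some $d\geq 2$. Then for every sequence of nonnegative integers $\{f(n)\}_{n\geq 1}$ with $f(n)=o(n^{d-2})$, the graph $G$ does not satisfy the $\{f(n)\}$-containment property.
   Context: Firefighter process on a graph $G$ with a sequence of integers $\{f(n)\}$: an initial fire occupies a finite set of vertices; at each time $n\geq 1$, at most $f(n)$ vertices that are not on fire become protected, and then the fire spreads to all unprotected neighbours of vertices on fire; once a vertex is protected or on fire it stays so forever. $G$ has the $\{f(n)\}$-containment property if for every finite initial fire there is a protection strategy (protecting at most $f(n)$ vertices at time $n$) such that the set of burning vertices is eventually constant. The volume growth is $v(n)=|B_n(\mathrm{id})|$, the number of group elements at word distance at most $n$ from the identity. For functions $g,h$, $g\preceq h$ means there is $C>0$ with $g(x)\leq C h(Cx)$ for all $x$, and $h\succeq g$ means $g\preceq h$. *)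

theory Defs
  imports "HOL-Algebra.Generated_Groups" "HOL-Library.Landau_Symbols"
begin

text \<open>P n is the set of vertices protected at time n (n \<ge> 1); F is the initial fire.
  burning n is the set of vertices on fire after time n.\<close>

primrec burning :: "'a set \<Rightarrow> ('a \<Rightarrow> 'a \<Rightarrow> bool) \<Rightarrow> 'a set \<Rightarrow> (nat \<Rightarrow> 'a set) \<Rightarrow> nat \<Rightarrow> 'a set" where
  "burning V adj F P 0 = F"
| "burning V adj F P (Suc n) =
     burning V adj F P n \<union>
     {y \<in> V. y \<notin> (\<Union>k\<in>{1..Suc n}. P k) \<and> (\<exists>x\<in>burning V adj F P n. adj x y)}"

definition valid_strategy :: "'a set \<Rightarrow> ('a \<Rightarrow> 'a \<Rightarrow> bool) \<Rightarrow> (nat \<Rightarrow> nat) \<Rightarrow> 'a set \<Rightarrow> (nat \<Rightarrow> 'a set) \<Rightarrow> bool" where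
  "valid_strategy V adj f F P \<longleftrightarrow>
     (\<forall>n\<ge>1. P n \<subseteq> V \<and> finite (P n) \<and> card (P n) \<le> f n \<and>
            P n \<inter> burning V adj F P (n - 1) = {})"

definition containment_property :: "'a set \<Rightarrow> ('a \<Rightarrow> 'a \<Rightarrow> bool) \<Rightarrow> (nat \<Rightarrow> nat) \<Rightarrow> bool" where
  "containment_property V adj f \<longleftrightarrow>
     (\<forall>F. finite F \<and> F \<subseteq> V \<longrightarrow>
        (\<exists>P. valid_strategy V adj f F P \<and>
             (\<exists>N. \<forall>n\<ge>N. burning V adj F P n = burning V adj F P N)))"

definition cayley_adj :: "('a, 'b) monoid_scheme \<Rightarrow> 'a set \<Rightarrow> 'a \<Rightarrow> 'a \<Rightarrow> bool" where
  "cayley_adj G S x y \<longleftrightarrow> x \<in> carrier G \<and> (\<exists>s\<in>S. y = x \<otimes>\<^bsub>G\<^esub> s)"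

definition word_prod :: "('a, 'b) monoid_scheme \<Rightarrow> 'a list \<Rightarrow> 'a" where
  "word_prod G ws = foldr (\<lambda>a b. a \<otimes>\<^bsub>G\<^esub> b) ws \<one>\<^bsub>G\<^esub>"

definition word_ball :: "('a, 'b) monoid_scheme \<Rightarrow> 'a set \<Rightarrow> real \<Rightarrow> 'a set" where
  "word_ball G S r = {g \<in> carrier G. \<exists>ws. set ws \<subseteq> S \<and> real (length ws) \<le> r \<and> word_prod G ws = g}"

definition volume_growth :: "('a, 'b) monoid_scheme \<Rightarrow> 'a set \<Rightarrow> real \<Rightarrow> nat" where
  "volume_growth G S r = card (word_ball G S r)"

end

theory Submission
  imports Defs
begin

definition bd :: "('a, 'b) monoid_scheme \<Rightarrow> 'a set \<Rightarrow> 'a set \<Rightarrow> 'a set" where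
  "bd G S A = {y \<in> carrier G. y \<notin> A \<and> (\<exists>x\<in>A. \<exists>s\<in>S. y = x \<otimes>\<^bsub>G\<^esub> s)}"

lemma word_prod_closed:
  assumes "group G" "S \<subseteq> carrier G" "set ws \<subseteq> S"
  shows "word_prod G ws \<in> carrier G"
  using assms(3)
proof (induction ws)
  case Nil
  then show ?case using assms(1) by (simp add: word_prod_def group.is_monoid monoid.one_closed)
next
  case (Cons a ws)
  then show ?case using assms by (auto simp: word_prod_def intro!: monoid.m_closed group.is_monoid)
qed

lemma word_prod_snoc:
  assumes "group G" "S \<subseteq> carrier G" "set ws \<subseteq> S" "s \<in> S"
  shows "word_prod G (ws @ [s]) = word_prod G ws \<otimes>\<^bsub>G\<^esub> s"
  using assms(3)
proof (induction ws)
  case Nil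
  interpret group G by fact
  show ?case using assms by (auto simp: word_prod_def)
next
  case (Cons a ws)
  interpret group G by fact
  have "word_prod G ws \<in> carrier G" using word_prod_closed[OF assms(1,2)] Cons by auto
  moreover have "a \<in> carrier G" "s \<in> carrier G" using Cons assms by auto
  ultimately show ?case using Cons by (simp add: word_prod_def m_assoc)
qed

lemma bd_finite:
  assumes "finite A" "finite S"
  shows "finite (bd G S A)"
proof -
  have "bd G S A \<subseteq> (\<lambda>(x,s). x \<otimes>\<^bsub>G\<^esub> s) ` (A \<times> S)" unfolding bd_def by force
  moreover have "finite ((\<lambda>(x,s). x \<otimes>\<^bsub>G\<^esub> s) ` (A \<times> S))"
    using assms by (intro finite_imageI finite_SigmaI) auto
  ultimately show ?thesis by (rule finite_subset)
qed

lemma exit_point: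
  assumes "group G" "S \<subseteq> carrier G" "set ws \<subseteq> S" "a \<in> A" "A \<subseteq> carrier G"
    "a \<otimes>\<^bsub>G\<^esub> word_prod G ws \<notin> A"
  shows "\<exists>i<length ws. a \<otimes>\<^bsub>G\<^esub> word_prod G (take (Suc i) ws) \<in> bd G S A"
  using assms(3,6)
proof (induction ws rule: rev_induct)
  case Nil
  interpret group G by fact
  show ?case using Nil assms by (auto simp: word_prod_def)
next
  case (snoc s xs)
  interpret group G by fact
  have xs: "set xs \<subseteq> S" and s: "s \<in> S" using snoc by auto
  have wc: "word_prod G xs \<in> carrier G" using word_prod_closed[OF assms(1,2) xs] .
  have ac: "a \<in> carrier G" using assms by auto
  show ?case
  proof (cases "a \<otimes>\<^bsub>G\<^esub> word_prod G xs \<in> A")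
    case True
    have "a \<otimes>\<^bsub>G\<^esub> word_prod G (xs @ [s]) = (a \<otimes>\<^bsub>G\<^esub> word_prod G xs) \<otimes>\<^bsub>G\<^esub> s"
      using word_prod_snoc[OF assms(1,2) xs s] wc ac s assms(2) by (auto simp: m_assoc)
    hence "a \<otimes>\<^bsub>G\<^esub> word_prod G (xs @ [s]) \<in> bd G S A"
    proof -
      have "a \<otimes>\<^bsub>G\<^esub> word_prod G xs \<otimes>\<^bsub>G\<^esub> s \<in> carrier G" using wc ac s assms(2) by blast
      thus ?thesis using True snoc.prems(2) s \<open>a \<otimes>\<^bsub>G\<^esub> word_prod G (xs @ [s]) = _\<close> unfolding bd_def by auto
    qed
    thus ?thesis by (intro exI[of _ "length xs"]) auto
  next
    case False
    then obtain i where "i < length xs" "a \<otimes>\<^bsub>G\<^esub> word_prod G (take (Suc i) xs) \<in> bd G S A"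
      using snoc.IH xs by auto
    thus ?thesis by (intro exI[of _ i]) auto
  qed
qed

lemma move_out_card:
  assumes "group G" "S \<subseteq> carrier G" "set ws \<subseteq> S" "A \<subseteq> carrier G" "finite A" "finite S"
  shows "card {a \<in> A. a \<otimes>\<^bsub>G\<^esub> word_prod G ws \<notin> A} \<le> length ws * card (bd G S A)"
proof -
  interpret group G by fact
  let ?w = "\<lambda>i. word_prod G (take (Suc i) ws)"
  have wc: "\<And>i. ?w i \<in> carrier G"
    using word_prod_closed[OF assms(1,2)] assms(3) by (meson order_trans set_take_subset)
  have sub: "{a \<in> A. a \<otimes>\<^bsub>G\<^esub> word_prod G ws \<notin> A} \<subseteq> (\<Union>i<length ws. {a \<in> A. a \<otimes>\<^bsub>G\<^esub> ?w i \<in> bd G S A})"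
    using exit_point[OF assms(1,2,3) _ assms(4)] by blast
  have each: "card {a \<in> A. a \<otimes>\<^bsub>G\<^esub> ?w i \<in> bd G S A} \<le> card (bd G S A)" for i
  proof (rule card_inj_on_le[where f = "\<lambda>a. a \<otimes>\<^bsub>G\<^esub> ?w i"])
    show "inj_on (\<lambda>a. a \<otimes>\<^bsub>G\<^esub> ?w i) {a \<in> A. a \<otimes>\<^bsub>G\<^esub> ?w i \<in> bd G S A}"
      using wc assms(4) by (auto simp: inj_on_def subset_iff)
    show "(\<lambda>a. a \<otimes>\<^bsub>G\<^esub> ?w i) ` {a \<in> A. a \<otimes>\<^bsub>G\<^esub> ?w i \<in> bd G S A} \<subseteq> bd G S A" by auto
    show "finite (bd G S A)" using bd_finite assms by blast
  qed
  have "card {a \<in> A. a \<otimes>\<^bsub>G\<^esub> word_prod G ws \<notin> A} \<le> card (\<Union>i<length ws. {a \<in> A. a \<otimes>\<^bsub>G\<^esub> ?w i \<in> bd G S A})"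
    using sub assms(5) by (intro card_mono) auto
  also have "\<dots> \<le> (\<Sum>i<length ws. card {a \<in> A. a \<otimes>\<^bsub>G\<^esub> ?w i \<in> bd G S A})" by (rule card_UN_le) auto
  also have "\<dots> \<le> (\<Sum>i<length ws. card (bd G S A))" by (intro sum_mono each)
  finally show ?thesis by simp
qed

lemma count_swap:
  assumes "finite A" "finite B"
  shows "(\<Sum>g\<in>B. card {a \<in> A. P a g}) = (\<Sum>a\<in>A. card {g \<in> B. P a g})"
proof -
  have "(\<Sum>g\<in>B. card {a \<in> A. P a g}) = (\<Sum>g\<in>B. \<Sum>a\<in>A. if P a g then 1 else 0)"
    using assms by (simp add: sum.If_cases Int_def)
  also have "\<dots> = (\<Sum>a\<in>A. \<Sum>g\<in>B. if P a g then 1 else 0)" by (rule sum.swap)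
  also have "\<dots> = (\<Sum>a\<in>A. card {g \<in> B. P a g})"
    using assms by (simp add: sum.If_cases Int_def)
  finally show ?thesis .
qed

lemma iso_count:
  assumes "group G" "S \<subseteq> carrier G" "finite S" "A \<subseteq> carrier G" "finite A"
    "B \<subseteq> carrier G" "finite B"
    "\<forall>g\<in>B. \<exists>ws. set ws \<subseteq> S \<and> length ws \<le> r \<and> word_prod G ws = g"
    "2 * card A \<le> card B"
  shows "card A \<le> 2 * r * card (bd G S A)"
proof -
  interpret group G by fact
  have h1: "card {a \<in> A. a \<otimes>\<^bsub>G\<^esub> g \<notin> A} \<le> r * card (bd G S A)" if gB: "g \<in> B" for g
  proof -
    obtain ws where ws0: "set ws \<subseteq> S \<and> length ws \<le> r \<and> word_prod G ws = g"
      using bspec[OF assms(8) gB] ..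
    hence ws: "set ws \<subseteq> S" "length ws \<le> r" "word_prod G ws = g" by simp_all
    have "card {a \<in> A. a \<otimes>\<^bsub>G\<^esub> g \<notin> A} \<le> length ws * card (bd G S A)"
      using move_out_card[OF assms(1,2) ws(1) assms(4,5,3)] ws(3) by simp
    also have "\<dots> \<le> r * card (bd G S A)" using ws(2) by simp
    finally show ?thesis .
  qed
  have h2: "card B \<le> card A + card {g \<in> B. a \<otimes>\<^bsub>G\<^esub> g \<notin> A}" if "a \<in> A" for a
  proof -
    have "card {g \<in> B. a \<otimes>\<^bsub>G\<^esub> g \<in> A} \<le> card A"
    proof (rule card_inj_on_le[where f = "\<lambda>g. a \<otimes>\<^bsub>G\<^esub> g"])
      show "inj_on (\<lambda>g. a \<otimes>\<^bsub>G\<^esub> g) {g \<in> B. a \<otimes>\<^bsub>G\<^esub> g \<in> A}"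
        using that assms(4,6) by (auto simp: inj_on_def subset_iff)
    qed (use assms in auto)
    moreover have "card B = card {g \<in> B. a \<otimes>\<^bsub>G\<^esub> g \<in> A} + card {g \<in> B. a \<otimes>\<^bsub>G\<^esub> g \<notin> A}"
    proof -
      have eq: "{g \<in> B. a \<otimes>\<^bsub>G\<^esub> g \<in> A} \<union> {g \<in> B. a \<otimes>\<^bsub>G\<^esub> g \<notin> A} = B" by auto
      hence "card B = card ({g \<in> B. a \<otimes>\<^bsub>G\<^esub> g \<in> A} \<union> {g \<in> B. a \<otimes>\<^bsub>G\<^esub> g \<notin> A})" by simp
      also have "\<dots> = card {g \<in> B. a \<otimes>\<^bsub>G\<^esub> g \<in> A} + card {g \<in> B. a \<otimes>\<^bsub>G\<^esub> g \<notin> A}"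
        using assms(7) by (intro card_Un_disjoint) auto
      finally show ?thesis .
    qed
    ultimately show ?thesis by linarith
  qed
  have "card A * (card B - card A) \<le> (\<Sum>a\<in>A. card {g \<in> B. a \<otimes>\<^bsub>G\<^esub> g \<notin> A})"
  proof -
    have "(\<Sum>a\<in>A. card B - card A) \<le> (\<Sum>a\<in>A. card {g \<in> B. a \<otimes>\<^bsub>G\<^esub> g \<notin> A})"
    proof (intro sum_mono)
      fix a assume "a \<in> A"
      from h2[OF this] show "card B - card A \<le> card {g \<in> B. a \<otimes>\<^bsub>G\<^esub> g \<notin> A}" by linarith
    qed
    thus ?thesis by simp
  qed
  also have "\<dots> = (\<Sum>g\<in>B. card {a \<in> A. a \<otimes>\<^bsub>G\<^esub> g \<notin> A})"
    using count_swap[OF assms(5,7)] by simp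
  also have "\<dots> \<le> (\<Sum>g\<in>B. r * card (bd G S A))" by (intro sum_mono h1)
  also have "\<dots> = card B * (r * card (bd G S A))" by simp
  finally have main: "card A * (card B - card A) \<le> card B * (r * card (bd G S A))" .
  show ?thesis
  proof (cases "card A = 0")
    case True thus ?thesis by simp
  next
    case False
    have "card B * card A \<le> 2 * (card A * (card B - card A))"
    proof -
      define k where "k = card B - card A"
      have k: "card B = card A + k" unfolding k_def using assms(9) by simp
      hence kA: "card A \<le> k" using assms(9) by simp
      have "card B * card A = card A * card A + k * card A" using k by (simp add: algebra_simps)
      also have "\<dots> \<le> k * card A + k * card A" using kA by simp
      also have "\<dots> = 2 * (card A * (card B - card A))" using k by simp
      finally show ?thesis .
    qed
    also have "\<dots> \<le> card B * (2 * r * card (bd G S A))" using main by simp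
    finally have "card B * card A \<le> card B * (2 * r * card (bd G S A))" .
    moreover have "card B > 0" using assms(9) False by linarith
    ultimately show ?thesis by (metis mult_le_cancel1)
  qed
qed

lemma iso_real:
  assumes "group G" "S \<subseteq> carrier G" "finite S" "C > 0" "d > 0"
    "\<forall>x::real. x \<ge> 0 \<longrightarrow> x powr d \<le> C * real (volume_growth G S (C * x))"
    "A \<subseteq> carrier G" "finite A" "A \<noteq> {}"
  shows "real (card A) powr (1 - 1/d) / (2 * (C * (2*C) powr (1/d) + 1)) \<le> real (card (bd G S A))"
proof -
  define m where "m = real (card A)"
  have m1: "m \<ge> 1" using assms(8,9) m_def by (simp add: Suc_leI card_gt_0_iff)
  define x where "x = (2*C*m) powr (1/d)"
  have x0: "x \<ge> 0" unfolding x_def by simp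
  have "x powr d = 2*C*m" unfolding x_def using assms(4,5) m1 by (simp add: powr_powr)
  hence "2*C*m \<le> C * real (volume_growth G S (C * x))" using assms(6) x0 by metis
  hence vB: "2*m \<le> real (card (word_ball G S (C*x)))" using assms(4) by (simp add: volume_growth_def)
  define B where "B = word_ball G S (C*x)"
  have cB: "2 * card A \<le> card B" using vB m_def B_def by simp
  have cA: "card A \<ge> 1" using assms(8,9) by (simp add: Suc_leI card_gt_0_iff)
  have cBpos: "card B > 0" using cB cA by linarith
  have fB: "finite B"
  proof (rule ccontr)
    assume "infinite B" hence "card B = 0" by simp
    thus False using cBpos by simp
  qed
  define r where "r = nat \<lceil>C*x\<rceil>"
  have cx0: "C*x \<ge> 0" using assms(4) x0 by simp
  have rC: "real r = of_int \<lceil>C*x\<rceil>" unfolding r_def using cx0 by simp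
  have Bw: "\<forall>g\<in>B. \<exists>ws. set ws \<subseteq> S \<and> length ws \<le> r \<and> word_prod G ws = g"
  proof
    fix g assume "g \<in> B"
    then obtain ws where ws: "set ws \<subseteq> S" "real (length ws) \<le> C*x" "word_prod G ws = g"
      unfolding B_def word_ball_def by blast
    have "real (length ws) \<le> real r" using ws(2) rC le_of_int_ceiling[of "C*x"] by linarith
    hence "length ws \<le> r" by simp
    thus "\<exists>ws. set ws \<subseteq> S \<and> length ws \<le> r \<and> word_prod G ws = g" using ws by blast
  qed
  have BC: "B \<subseteq> carrier G" unfolding B_def word_ball_def by auto
  have key: "card A \<le> 2 * r * card (bd G S A)"
    by (rule iso_count[OF assms(1,2,3,7,8) BC fB Bw cB])
  have rle: "real r \<le> C*x + 1" using rC of_int_ceiling_le_add_one[of "C*x"] by linarith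
  have Cx: "C*x = C * (2*C) powr (1/d) * m powr (1/d)"
    unfolding x_def using assms(4) m1 by (simp add: powr_mult)
  have mp1: "m powr (1/d) \<ge> 1" using m1 assms(5) by (intro ge_one_powr_ge_zero) auto
  define D where "D = C * (2*C) powr (1/d) + 1"
  have D0: "D > 0" unfolding D_def using assms(4) by (simp add: add_pos_nonneg)
  have "real r \<le> D * m powr (1/d)"
    using rle Cx mp1 unfolding D_def by (simp add: algebra_simps)
  hence "m \<le> 2 * (D * m powr (1/d)) * real (card (bd G S A))"
  proof -
    have "m \<le> real (2 * r * card (bd G S A))" unfolding m_def using key by (rule of_nat_mono)
    also have "\<dots> = 2 * real r * real (card (bd G S A))" by simp
    also have "\<dots> \<le> 2 * (D * m powr (1/d)) * real (card (bd G S A))"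
      using \<open>real r \<le> D * m powr (1/d)\<close> by (intro mult_right_mono mult_left_mono) auto
    finally show ?thesis .
  qed
  hence ineq: "m \<le> real (card (bd G S A)) * (2 * D * m powr (1/d))" by (simp add: algebra_simps)
  have pos: "2 * D * m powr (1/d) > 0" using D0 mp1 by (metis mult_pos_pos zero_less_numeral less_le_trans zero_less_one)
  have "m / m powr (1/d) / (2*D) = m / (2 * D * m powr (1/d))" by (simp add: field_simps)
  also have "\<dots> \<le> real (card (bd G S A))" using ineq by (subst pos_divide_le_eq[OF pos])
  finally have "m / m powr (1/d) / (2*D) \<le> real (card (bd G S A))" .
  moreover have "m / m powr (1/d) = m powr (1 - 1/d)"
    using m1 by (simp add: powr_diff)
  ultimately show ?thesis unfolding D_def m_def by simp
qed


lemma powr_step: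
  fixes m d :: real
  assumes "m \<ge> 1" "d \<ge> 1"
  shows "(m+1) powr d - m powr d \<le> d * 2 powr (d-1) * m powr (d-1)"
proof -
  have "\<exists>z. m < z \<and> z < m+1 \<and> (m+1) powr d - m powr d = ((m+1) - m) * (d * z powr (d-1))"
    by (rule MVT2) (use assms in \<open>auto intro!: has_real_derivative_powr\<close>)
  then obtain z where z: "m < z" "z < m+1" "(m+1) powr d - m powr d = d * z powr (d-1)" by auto
  have "z powr (d-1) \<le> (2*m) powr (d-1)"
    using z assms by (intro powr_mono2) auto
  also have "\<dots> = 2 powr (d-1) * m powr (d-1)" using assms by (simp add: powr_mult)
  finally show ?thesis using z(3) assms by (simp add: mult_left_mono)
qed

lemma growth_num:
  fixes c d :: real and Sf :: "nat \<Rightarrow> real"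
  assumes c: "c > 0" and d: "d \<ge> 2"
    and Sb: "\<forall>\<epsilon>>0. \<exists>K0. \<forall>n. Sf n \<le> \<epsilon> * real n powr (d-1) + K0"
  shows "\<exists>lam>0. \<exists>K::nat. K \<ge> 1 \<and> (\<forall>b::nat\<Rightarrow>real.
     (\<forall>n. b n \<ge> 0 \<and> b (Suc n) \<ge> b n + c * b n powr (1-1/d) - Sf (Suc n)) \<and> b 0 \<ge> lam * real K powr d
      \<longrightarrow> (\<forall>n. b n \<ge> lam * real (n+K) powr d))"
proof -
  define lam where "lam = (c / (d * 2 powr d)) powr d"
  have d0: "d > 0" using d by simp
  have lam0: "lam > 0" unfolding lam_def using c d by simp
  have lamr: "lam powr (1/d) = c / (d * 2 powr d)"
    unfolding lam_def using c d0 by (simp add: powr_powr)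
  define e where "e = 1 - 1/d"
  have lamsplit: "lam = lam powr e * lam powr (1/d)"
    unfolding e_def using lam0 by (simp add: powr_add[symmetric])
  have e0: "e \<ge> 0" unfolding e_def using d by (simp add: field_simps)
  define \<delta> where "\<delta> = c * lam powr e / 2"
  have \<delta>0: "\<delta> > 0" unfolding \<delta>_def using c lam0 by simp
  have lamd: "lam * d * 2 powr (d-1) \<le> \<delta>"
  proof -
    have "lam * d * 2 powr (d-1) = lam powr e * (lam powr (1/d) * d * 2 powr d) / 2"
      using lamsplit by (simp add: powr_diff)
    also have "lam powr (1/d) * d * 2 powr d = c" using lamr d0 by simp
    finally show ?thesis unfolding \<delta>_def by simp
  qed
  obtain K0 where K0: "\<forall>n. Sf n \<le> (\<delta>/2) * real n powr (d-1) + K0"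
    using Sb \<delta>0 by (metis half_gt_zero)
  define K where "K = max 1 (nat \<lceil>2 * K0 / \<delta>\<rceil>)"
  have K1: "K \<ge> 1" unfolding K_def by simp
  have K0le: "K0 \<le> (\<delta>/2) * real K powr (d-1)"
  proof -
    have "2 * K0 / \<delta> \<le> real K" unfolding K_def by linarith
    hence "K0 \<le> (\<delta>/2) * real K" using \<delta>0 by (simp add: field_simps)
    also have "real K \<le> real K powr (d-1)"
      using powr_mono[of 1 "d-1" "real K"] K1 d by simp
    hence "(\<delta>/2) * real K \<le> (\<delta>/2) * real K powr (d-1)" using \<delta>0 by simp
    finally show ?thesis .
  qed
  show ?thesis
  proof (intro exI[of _ lam] exI[of _ K] conjI allI impI lam0 K1)
    fix b :: "nat \<Rightarrow> real" and n
    assume hb: "(\<forall>n. b n \<ge> 0 \<and> b (Suc n) \<ge> b n + c * b n powr (1-1/d) - Sf (Suc n)) \<and> b 0 \<ge> lam * real K powr d"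
    show "b n \<ge> lam * real (n+K) powr d"
    proof (induction n)
      case 0 thus ?case using hb by simp
    next
      case (Suc n)
      define m where "m = real (n+K)"
      have m1: "m \<ge> 1" unfolding m_def using K1 by simp
      define y where "y = lam * m powr d"
      have y0: "y \<ge> 0" unfolding y_def using lam0 by simp
      have hby: "b n \<ge> y" using Suc.IH unfolding y_def m_def .
      have "y powr e \<le> b n powr e" using hby y0 e0 by (intro powr_mono2) auto
      hence st1: "b (Suc n) \<ge> y + c * y powr e - Sf (Suc n)"
      proof -
        have "b n + c * b n powr e - Sf (Suc n) \<le> b (Suc n)" using hb unfolding e_def by blast
        moreover have "c * y powr e \<le> c * b n powr e" using c \<open>y powr e \<le> b n powr e\<close> by simp
        ultimately show ?thesis using hby by linarith
      qed
      have ye: "y powr e = lam powr e * m powr (d-1)"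
      proof -
        have "y powr e = lam powr e * (m powr d) powr e" unfolding y_def using lam0 m1 by (simp add: powr_mult)
        also have "(m powr d) powr e = m powr (d-1)" proof -
          have "d * (1 - 1/d) = d - 1" using d0 by (simp add: field_simps)
          thus ?thesis unfolding e_def by (simp add: powr_powr)
        qed
        finally show ?thesis .
      qed
      have Sfb: "Sf (Suc n) \<le> \<delta> * m powr (d-1)"
      proof -
        have "real (Suc n) powr (d-1) \<le> m powr (d-1)" unfolding m_def using K1 d by (intro powr_mono2) auto
        moreover have "real K powr (d-1) \<le> m powr (d-1)" unfolding m_def using K1 d by (intro powr_mono2) auto
        ultimately have "\<delta>/2 * real (Suc n) powr (d-1) \<le> \<delta>/2 * m powr (d-1)"
          "\<delta>/2 * real K powr (d-1) \<le> \<delta>/2 * m powr (d-1)"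
          using \<delta>0 by (simp_all add: mult_left_mono)
        thus ?thesis using K0[rule_format, of "Suc n"] K0le by linarith
      qed
      have "b (Suc n) \<ge> lam * m powr d + \<delta> * m powr (d-1)"
        using st1 ye Sfb unfolding y_def \<delta>_def by simp
      moreover have "lam * (m+1) powr d \<le> lam * m powr d + \<delta> * m powr (d-1)"
      proof -
        have "(m+1) powr d - m powr d \<le> d * 2 powr (d-1) * m powr (d-1)"
          using powr_step m1 d by simp
        hence "lam * ((m+1) powr d - m powr d) \<le> lam * (d * 2 powr (d-1)) * m powr (d-1)"
          using lam0 by (simp add: mult_left_mono mult.assoc)
        also have "\<dots> \<le> \<delta> * m powr (d-1)" using lamd by (intro mult_right_mono) (auto simp: mult.assoc)
        finally show ?thesis by (simp add: algebra_simps)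
      qed
      moreover have "real (Suc n + K) = m + 1" unfolding m_def by simp
      ultimately show ?case by (simp add: add.commute)
    qed
  qed
qed


lemma Sf_bound:
  fixes f :: "nat \<Rightarrow> nat" and d :: real
  assumes d: "d \<ge> 2" and o: "(\<lambda>n. real (f n)) \<in> o(\<lambda>n. real n powr (d - 2))"
  shows "\<forall>\<epsilon>>0. \<exists>K0. \<forall>n. (\<Sum>k=1..n. real (f k)) \<le> \<epsilon> * real n powr (d-1) + K0"
proof (intro allI impI)
  fix \<epsilon> :: real assume e: "\<epsilon> > 0"
  have "eventually (\<lambda>n. norm (real (f n)) \<le> \<epsilon> * norm (real n powr (d - 2))) at_top"
    using landau_o.smallD[OF o e] .
  then obtain N0 where N0: "\<And>n. n \<ge> N0 \<Longrightarrow> real (f n) \<le> \<epsilon> * real n powr (d - 2)"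
    unfolding eventually_at_top_linorder by auto
  define K0 where "K0 = (\<Sum>k=1..N0. real (f k))"
  show "\<exists>K0. \<forall>n. (\<Sum>k=1..n. real (f k)) \<le> \<epsilon> * real n powr (d-1) + K0"
  proof (intro exI[of _ K0] allI)
    fix n
    have each: "real (f k) \<le> (if k \<le> N0 then real (f k) else 0) + \<epsilon> * real n powr (d-2)"
      if "k \<in> {1..n}" for k
    proof (cases "k \<le> N0")
      case True thus ?thesis using e by simp
    next
      case False
      have "real (f k) \<le> \<epsilon> * real k powr (d - 2)" using N0 False by simp
      also have "\<dots> \<le> \<epsilon> * real n powr (d-2)"
        using that d e by (intro mult_left_mono powr_mono2) auto
      finally show ?thesis using False by simp
    qed
    have "(\<Sum>k=1..n. real (f k)) \<le> (\<Sum>k=1..n. (if k \<le> N0 then real (f k) else 0) + \<epsilon> * real n powr (d-2))"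
      by (intro sum_mono each)
    also have "\<dots> = (\<Sum>k=1..n. (if k \<le> N0 then real (f k) else 0)) + real n * (\<epsilon> * real n powr (d-2))"
      by (simp add: sum.distrib)
    also have "(\<Sum>k=1..n. (if k \<le> N0 then real (f k) else 0)) = (\<Sum>k\<in>{1..n} \<inter> {..N0}. real (f k))"
      by (simp add: sum.If_cases Int_def)
    also have "\<dots> \<le> K0" unfolding K0_def by (intro sum_mono2) auto
    also have "real n * (\<epsilon> * real n powr (d-2)) = \<epsilon> * real n powr (d-1)"
    proof (cases "n = 0")
      case True thus ?thesis using d by simp
    next
      case False
      have "1 + (d-2) = d - 1" by simp
      hence "real n * real n powr (d-2) = real n powr (d-1)"
        using powr_add[of "real n" 1 "d-2"] False by simp
      thus ?thesis by (simp add: algebra_simps)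
    qed
    finally show "(\<Sum>k=1..n. real (f k)) \<le> \<epsilon> * real n powr (d-1) + K0" by linarith
  qed
qed

lemma fire_facts:
  assumes "F \<subseteq> carrier G" "finite F" "finite S"
  shows "burning (carrier G) (cayley_adj G S) F P n \<subseteq> carrier G \<and>
         finite (burning (carrier G) (cayley_adj G S) F P n) \<and>
         F \<subseteq> burning (carrier G) (cayley_adj G S) F P n"
proof (induction n)
  case 0 thus ?case using assms by simp
next
  case (Suc n)
  let ?A = "burning (carrier G) (cayley_adj G S) F P n"
  have "{y \<in> carrier G. y \<notin> (\<Union>k\<in>{1..Suc n}. P k) \<and> (\<exists>x\<in>?A. cayley_adj G S x y)}
        \<subseteq> (\<lambda>(x,s). x \<otimes>\<^bsub>G\<^esub> s) ` (?A \<times> S)"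
    unfolding cayley_adj_def by auto
  moreover have "finite ((\<lambda>(x,s). x \<otimes>\<^bsub>G\<^esub> s) ` (?A \<times> S))"
    using Suc.IH assms(3) by (intro finite_imageI finite_SigmaI) auto
  ultimately have "finite {y \<in> carrier G. y \<notin> (\<Union>k\<in>{1..Suc n}. P k) \<and> (\<exists>x\<in>?A. cayley_adj G S x y)}"
    by (rule finite_subset)
  moreover have "burning (carrier G) (cayley_adj G S) F P (Suc n) = ?A \<union> {y \<in> carrier G. y \<notin> (\<Union>k\<in>{1..Suc n}. P k) \<and> (\<exists>x\<in>?A. cayley_adj G S x y)}"
    by (simp only: burning.simps)
  ultimately show ?case using Suc.IH by (metis (no_types, lifting) Un_least finite_UnI le_supI1 mem_Collect_eq subsetI)
qed

lemma fire_rec: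
  assumes "F \<subseteq> carrier G" "finite F" "finite S"
    and vs: "valid_strategy (carrier G) (cayley_adj G S) f F P"
  shows "real (card (burning (carrier G) (cayley_adj G S) F P (Suc n))) \<ge>
         real (card (burning (carrier G) (cayley_adj G S) F P n)) +
         real (card (bd G S (burning (carrier G) (cayley_adj G S) F P n))) - (\<Sum>k=1..Suc n. real (f k))"
proof -
  let ?A = "\<lambda>n. burning (carrier G) (cayley_adj G S) F P n"
  let ?Pi = "\<Union>k\<in>{1..Suc n}. P k"
  have fA: "finite (?A n)" "finite (?A (Suc n))"
    using fire_facts[OF assms(1-3), of P n] fire_facts[OF assms(1-3), of P "Suc n"] by blast+
  have Pk: "finite (P k) \<and> card (P k) \<le> f k" if "k \<in> {1..Suc n}" for k
    using vs that unfolding valid_strategy_def by auto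
  have fPi: "finite ?Pi" using Pk by auto
  have cPi: "card ?Pi \<le> (\<Sum>k=1..Suc n. f k)"
    using card_UN_le[of "{1..Suc n}" P] Pk by (meson finite_atLeastAtMost order_trans sum_mono)
  have sub: "?A n \<union> (bd G S (?A n) - ?Pi) \<subseteq> ?A (Suc n)"
  proof -
    have "bd G S (?A n) - ?Pi \<subseteq> {y \<in> carrier G. y \<notin> ?Pi \<and> (\<exists>x\<in>?A n. cayley_adj G S x y)}"
    proof
      fix y assume y: "y \<in> bd G S (?A n) - ?Pi"
      then obtain x s where xs: "x \<in> ?A n" "s \<in> S" "y = x \<otimes>\<^bsub>G\<^esub> s" "y \<in> carrier G"
        unfolding bd_def by blast
      have "x \<in> carrier G" using xs(1) fire_facts[OF assms(1-3), of P n] by blast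
      hence "cayley_adj G S x y" unfolding cayley_adj_def using xs by blast
      thus "y \<in> {y \<in> carrier G. y \<notin> ?Pi \<and> (\<exists>x\<in>?A n. cayley_adj G S x y)}"
        using xs y by blast
    qed
    moreover have "?A (Suc n) = ?A n \<union> {y \<in> carrier G. y \<notin> ?Pi \<and> (\<exists>x\<in>?A n. cayley_adj G S x y)}"
      by (simp only: burning.simps)
    ultimately show ?thesis by blast
  qed
  have fbd: "finite (bd G S (?A n))" using bd_finite fA assms(3) by blast
  have "card (?A n) + card (bd G S (?A n) - ?Pi) = card (?A n \<union> (bd G S (?A n) - ?Pi))"
    using fA fbd by (intro card_Un_disjoint[symmetric]) (auto simp: bd_def)
  also have "\<dots> \<le> card (?A (Suc n))" using sub fA by (intro card_mono) auto
  finally have h1: "card (?A n) + card (bd G S (?A n) - ?Pi) \<le> card (?A (Suc n))" .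
  have h2: "card (bd G S (?A n)) - card ?Pi \<le> card (bd G S (?A n) - ?Pi)"
    using diff_card_le_card_Diff[OF fPi] .
  have "real (card (bd G S (?A n))) - real (card ?Pi) \<le> real (card (bd G S (?A n) - ?Pi))"
    using h2 by linarith
  moreover have "real (card ?Pi) \<le> (\<Sum>k=1..Suc n. real (f k))"
    using cPi by (metis of_nat_le_iff of_nat_sum)
  moreover have "real (card (?A n)) + real (card (bd G S (?A n) - ?Pi)) \<le> real (card (?A (Suc n)))"
    using h1 by linarith
  ultimately show ?thesis by linarith
qed


theorem theorem1:
  fixes G :: "('a, 'b) monoid_scheme" and S :: "'a set" and d :: real and f :: "nat \<Rightarrow> nat"
  assumes "group G"
    and "finite S" and "S \<subseteq> carrier G"
    and "\<forall>s\<in>S. inv\<^bsub>G\<^esub> s \<in> S"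
    and "generate G S = carrier G"
    and "d \<ge> 2"
    and "\<exists>C>0. \<forall>x::real. x \<ge> 0 \<longrightarrow> x powr d \<le> C * real (volume_growth G S (C * x))"
    and "(\<lambda>n. real (f n)) \<in> o(\<lambda>n. real n powr (d - 2))"
  shows "\<not> containment_property (carrier G) (cayley_adj G S) f"
proof
  assume cp: "containment_property (carrier G) (cayley_adj G S) f"
  obtain C where C: "C > 0" "\<forall>x::real. x \<ge> 0 \<longrightarrow> x powr d \<le> C * real (volume_growth G S (C * x))"
    using assms(7) by blast
  have d0: "d > 0" using assms(6) by simp
  define c where "c = 1 / (2 * (C * (2*C) powr (1/d) + 1))"
  have c0: "c > 0" unfolding c_def using C(1) by (simp add: add_pos_nonneg)
  have iso: "c * real (card A) powr (1 - 1/d) \<le> real (card (bd G S A))"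
    if "A \<subseteq> carrier G" "finite A" "A \<noteq> {}" for A
    using iso_real[OF assms(1,3,2) C(1) d0 C(2) that] unfolding c_def by simp
  define Sf where "Sf = (\<lambda>n. \<Sum>k=1..n. real (f k))"
  have Sb: "\<forall>\<epsilon>>0. \<exists>K0. \<forall>n. Sf n \<le> \<epsilon> * real n powr (d-1) + K0"
    unfolding Sf_def by (rule Sf_bound[OF assms(6,8)])
  obtain lam K where lam: "lam > 0" "K \<ge> 1" and
    grow: "\<And>b::nat\<Rightarrow>real. (\<forall>n. b n \<ge> 0 \<and> b (Suc n) \<ge> b n + c * b n powr (1-1/d) - Sf (Suc n))
       \<Longrightarrow> b 0 \<ge> lam * real K powr d \<Longrightarrow> (\<forall>n. b n \<ge> lam * real (n+K) powr d)"
    using growth_num[OF c0 assms(6) Sb] by blast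
  have inf: "infinite (carrier G)"
  proof
    assume fin: "finite (carrier G)"
    define x where "x = C * real (card (carrier G)) + 1"
    have x1: "x \<ge> 1" unfolding x_def using C(1) by simp
    have "x \<le> x powr d" using powr_mono[of 1 d x] x1 assms(6) by simp
    also have "\<dots> \<le> C * real (volume_growth G S (C * x))" using C(2) x1 by simp
    also have "\<dots> \<le> C * real (card (carrier G))"
      using C(1) fin unfolding volume_growth_def word_ball_def
      by (intro mult_left_mono) (auto intro!: card_mono)
    finally show False unfolding x_def by simp
  qed
  obtain F where F: "finite F" "card F = nat \<lceil>lam * real K powr d\<rceil> + 1" "F \<subseteq> carrier G"
    using infinite_arbitrarily_large[OF inf] by blast
  have Fne: "F \<noteq> {}" using F(2) by auto
  obtain P N where vs: "valid_strategy (carrier G) (cayley_adj G S) f F P"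
    and N: "\<forall>n\<ge>N. burning (carrier G) (cayley_adj G S) F P n = burning (carrier G) (cayley_adj G S) F P N"
  proof -
    have "finite F \<and> F \<subseteq> carrier G" using F by blast
    hence "\<exists>P. valid_strategy (carrier G) (cayley_adj G S) f F P \<and>
             (\<exists>N. \<forall>n\<ge>N. burning (carrier G) (cayley_adj G S) F P n = burning (carrier G) (cayley_adj G S) F P N)"
      using cp unfolding containment_property_def by (elim allE impE) 
    thus ?thesis using that by blast
  qed
  define A where "A = (\<lambda>n. burning (carrier G) (cayley_adj G S) F P n)"
  define b where "b = (\<lambda>n. real (card (A n)))"
  have Af: "A n \<subseteq> carrier G \<and> finite (A n) \<and> F \<subseteq> A n" for n
    unfolding A_def using fire_facts[OF F(3,1) assms(2)] by blast
  have rec: "\<forall>n. b n \<ge> 0 \<and> b (Suc n) \<ge> b n + c * b n powr (1-1/d) - Sf (Suc n)"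
  proof
    fix n
    have ne: "A n \<noteq> {}" using Af[of n] Fne by blast
    have "b (Suc n) \<ge> b n + real (card (bd G S (A n))) - Sf (Suc n)"
      using fire_rec[OF F(3,1) assms(2) vs, of n] unfolding b_def A_def Sf_def by simp
    moreover have "c * b n powr (1-1/d) \<le> real (card (bd G S (A n)))"
      using iso[of "A n"] Af[of n] ne unfolding b_def by blast
    ultimately show "b n \<ge> 0 \<and> b (Suc n) \<ge> b n + c * b n powr (1-1/d) - Sf (Suc n)"
      unfolding b_def by simp
  qed
  have b0: "b 0 \<ge> lam * real K powr d"
    unfolding b_def A_def using F(2) by simp linarith
  have low: "\<forall>n. b n \<ge> lam * real (n+K) powr d" using grow[OF rec b0] .
  define n where "n = N + nat \<lceil>b N / lam\<rceil> + 1"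
  have "N \<le> n" unfolding n_def by simp
  hence "A n = A N" using N unfolding A_def by blast
  hence "b n = b N" unfolding b_def by simp
  moreover have "real (n+K) \<le> real (n+K) powr d"
    using powr_mono[of 1 d "real (n+K)"] assms(6) lam(2) by simp
  hence "lam * real (n+K) \<le> lam * real (n+K) powr d" using lam(1) by simp
  moreover have "b N < lam * real (n+K)"
  proof -
    have "b N / lam < real (n+K)" unfolding n_def by linarith
    thus ?thesis using lam(1) by (simp add: field_simps)
  qed
  ultimately show False using low[rule_format, of n] by linarith
qed

end
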